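(* Let $n \ge 2$ and let $K_n$ be the complete graph on $n$ vertices (the interaction graph of a dense one-body Fermionic Hamiltonian on $n$ sites). Then: (i) $d_{\mathrm{swap}}(K_n) = n-2$, and there exists a swap network for $K_n$ with swap depth $n-2$ and $n$ interaction layers; (ii) if $n$ is odd, every swap network for $K_n$ has at least $n$ interaction layers (so $n$ interaction layers is optimal); (iii) if $n$ is even and $n > 2$, the minimum number of interaction layers over all swap networks for $K_n$ is $n-1$, and no swap network for $K_n$ has simultaneously swap depth $n-2$ and $n-1$ interaction layers.
   Context: Linear-connectivity swap network model. Let $G=(V,E)$ be a finite graph with $|V|=n$. Qubits occupy positions $0,1,\ldots,n-1$ on a line. A configuration is a bijection $\pi: V \to \{0,\ldots,n-1\}$. A swap layer is a set of pairwise disjoint pairs of adjacent positions $\{i,i+1\}$; applying it to a configuration exchanges the vertices located at the two positions of each pair. A swap network for $G$ consists of an initial configuration $\pi_0$ (chosen freely) and a sequence of swap layers $L_1,\ldots,L_d$, producing configurations $\pi_0,\pi_1,\ldots,\pi_d$, together with a sequence of interaction layers, each attached to some configuration $\pi_t$ (several interaction layers may be attached to the same configuration); an interaction layer at $\pi_t$ is a set of pairwise disjoint edges $\{v,w\}\in E$ with $|\pi_t(v)-\pi_t(w)|=1$ (so each vertex takes part in at most one interaction per layer). It is required that every edge of $G$ belongs to some interaction layer. The swap depth of the network is $d$ and its interaction depth is the number of interaction layers. $d_{\mathrm{swap}}(G)$ denotes the minimum swap depth over all swap networks for $G$. *)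

theory Defs
  imports Main
begin

text \<open>Graph G = (V,E): V a finite vertex set, E a set of edges, each edge a 2-element
subset of V. Positions on the line are 0,...,n-1 with n = card V.\<close>

definition configuration :: "'a set \<Rightarrow> ('a \<Rightarrow> nat) \<Rightarrow> bool" where
  "configuration V \<pi> \<longleftrightarrow> bij_betw \<pi> V {0..<card V}"

definition swap_layer :: "nat \<Rightarrow> nat set set \<Rightarrow> bool" where
  "swap_layer n L \<longleftrightarrow>
     (\<forall>P\<in>L. \<exists>i. P = {i, Suc i} \<and> Suc i < n) \<and>
     (\<forall>P\<in>L. \<forall>Q\<in>L. P \<noteq> Q \<longrightarrow> P \<inter> Q = {})"

definition swap_pos :: "nat set set \<Rightarrow> nat \<Rightarrow> nat" where
  "swap_pos L p = (if {p, Suc p} \<in> L then Suc p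
                   else if 0 < p \<and> {p - 1, p} \<in> L then p - 1 else p)"

definition apply_layer :: "nat set set \<Rightarrow> ('a \<Rightarrow> nat) \<Rightarrow> ('a \<Rightarrow> nat)" where
  "apply_layer L \<pi> = swap_pos L \<circ> \<pi>"

definition config_at :: "('a \<Rightarrow> nat) \<Rightarrow> nat set set list \<Rightarrow> nat \<Rightarrow> ('a \<Rightarrow> nat)" where
  "config_at \<pi>0 Ls t = foldl (\<lambda>\<pi> L. apply_layer L \<pi>) \<pi>0 (take t Ls)"

definition interaction_layer :: "'a set set \<Rightarrow> ('a \<Rightarrow> nat) \<Rightarrow> 'a set set \<Rightarrow> bool" where
  "interaction_layer E \<pi> I \<longleftrightarrow>
     I \<subseteq> E \<and>
     (\<forall>e\<in>I. \<forall>e'\<in>I. e \<noteq> e' \<longrightarrow> e \<inter> e' = {}) \<and>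
     (\<forall>e\<in>I. \<exists>v w. e = {v, w} \<and> (\<pi> v = Suc (\<pi> w) \<or> \<pi> w = Suc (\<pi> v)))"

text \<open>Swap depth = length Ls, interaction depth = length Is.\<close>
definition swap_network ::
  "'a set \<Rightarrow> 'a set set \<Rightarrow> ('a \<Rightarrow> nat) \<Rightarrow> nat set set list \<Rightarrow> (nat \<times> 'a set set) list \<Rightarrow> bool" where
  "swap_network V E \<pi>0 Ls Is \<longleftrightarrow>
     configuration V \<pi>0 \<and>
     (\<forall>L\<in>set Ls. swap_layer (card V) L) \<and>
     (\<forall>(t, I)\<in>set Is. t \<le> length Ls \<and> interaction_layer E (config_at \<pi>0 Ls t) I) \<and>
     (\<forall>e\<in>E. \<exists>(t, I)\<in>set Is. e \<in> I)"

definition d_swap :: "'a set \<Rightarrow> 'a set set \<Rightarrow> nat" where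
  "d_swap V E = (LEAST d. \<exists>\<pi>0 Ls Is. swap_network V E \<pi>0 Ls Is \<and> length Ls = d)"

definition d_int :: "'a set \<Rightarrow> 'a set set \<Rightarrow> nat" where
  "d_int V E = (LEAST k. \<exists>\<pi>0 Ls Is. swap_network V E \<pi>0 Ls Is \<and> length Is = k)"

definition Kn_V :: "nat \<Rightarrow> nat set" where
  "Kn_V n = {0..<n}"

definition Kn_E :: "nat \<Rightarrow> nat set set" where
  "Kn_E n = {{v, w} | v w. v < n \<and> w < n \<and> v \<noteq> w}"

end

theory Submission
  imports Defs
begin


definition fld :: "nat \<Rightarrow> int \<Rightarrow> nat" where
  "fld N x = (let y = x mod (2 * int N) in if y < int N then nat y else nat (2 * int N - 1 - y))"

lemma fld_char:
  assumes "0 \<le> y" "y < 2 * int N" "x = 2 * int N * q + y"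
  shows "fld N x = (if y < int N then nat y else nat (2 * int N - 1 - y))"
proof -
  have "x mod (2 * int N) = y"
    using assms by (simp add: mod_pos_pos_trivial)
  then show ?thesis by (simp add: fld_def)
qed

lemma fld_decomp:
  assumes "N > 0"
  obtains q y where "0 \<le> y" "y < 2 * int N" "x = 2 * int N * q + y"
proof -
  have "0 \<le> x mod (2 * int N)" "x mod (2 * int N) < 2 * int N" using assms by auto
  moreover have "x = 2 * int N * (x div (2 * int N)) + x mod (2 * int N)" by simp
  ultimately show ?thesis using that by blast
qed

lemma fld_lt: "N > 0 \<Longrightarrow> fld N x < N"
  apply (erule fld_decomp[where x = x])
  apply (subst fld_char, assumption+)
  by auto

definition stp :: "nat \<Rightarrow> nat \<Rightarrow> nat \<Rightarrow> nat" where
  "stp N k r = (if even (r + k) then (if r + 1 < N then r + 1 else r) else (if 1 \<le> r then r - 1 else r))"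

lemma par_nat: "0 \<le> y \<Longrightarrow> even (nat y + k) \<longleftrightarrow> even (y + int k)"
proof -
  assume "0 \<le> y"
  then have "nat y + k = nat (y + int k)" by simp
  then show ?thesis using \<open>0 \<le> y\<close> by (simp add: even_nat_iff)
qed

lemma fld_step_plus:
  assumes N: "N > 0" and ev: "even (x + int k)"
  shows "fld N (x + 1) = stp N k (fld N x)"
proof -
  obtain q y where y: "0 \<le> y" "y < 2 * int N" "x = 2 * int N * q + y" using fld_decomp[OF N] by blast
  define m where "m = int N * q"
  have xm: "x = 2 * m + y" using y(3) m_def by simp
  have ey: "even (y + int k)" using ev xm by presburger
  have fx: "fld N x = (if y < int N then nat y else nat (2 * int N - 1 - y))" using fld_char[OF y] .
  consider "y + 1 < int N" | "y + 1 = int N" | "int N \<le> y" "y + 1 < 2 * int N" | "y + 1 = 2 * int N"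
    using y by linarith
  then show ?thesis
  proof cases
    case 1
    have a: "fld N (x+1) = nat (y+1)"
      using fld_char[of "y+1" N "x+1" q] y 1 by simp
    have "fld N x = nat y" using fx 1 by simp
    then show ?thesis using a 1 y par_nat[of y k] ey unfolding stp_def by (simp add: nat_add_distrib)
  next
    case 2
    have a: "fld N (x+1) = nat (2 * int N - 1 - (y+1))"
      using fld_char[of "y+1" N "x+1" q] y 2 by simp
    have "fld N x = nat y" using fx 2 by simp
    then show ?thesis using a 2 y par_nat[of y k] ey unfolding stp_def by (simp; arith)
  next
    case 3
    have a: "fld N (x+1) = nat (2 * int N - 1 - (y+1))"
      using fld_char[of "y+1" N "x+1" q] y 3 by simp
    have b: "fld N x = nat (2 * int N - 1 - y)" using fx 3 by simp
    have h: "0 \<le> 2 * int N - 1 - y" using 3 by linarith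
    have "odd (2 * int N - 1 - y + int k)" using ey by presburger
    then have "odd (nat (2 * int N - 1 - y) + k)" using par_nat[OF h, of k] by simp
    then show ?thesis using a b 3 y unfolding stp_def by (simp add: nat_diff_distrib)
  next
    case 4
    have a: "fld N (x+1) = 0"
      using fld_char[of 0 N "x+1" "q+1"] y 4 N by (simp add: algebra_simps)
    have b: "fld N x = 0" using fx 4 by simp
    have "odd (0 + k)" using 4 ey by presburger
    then show ?thesis using a b unfolding stp_def by simp
  qed
qed

lemma fld_step_minus:
  assumes N: "N > 0" and ev: "odd (x + int k)"
  shows "fld N (x - 1) = stp N k (fld N x)"
proof -
  obtain q y where y: "0 \<le> y" "y < 2 * int N" "x = 2 * int N * q + y" using fld_decomp[OF N] by blast
  define m where "m = int N * q"
  have xm: "x = 2 * m + y" using y(3) m_def by simp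
  have ey: "odd (y + int k)" using ev xm by presburger
  have fx: "fld N x = (if y < int N then nat y else nat (2 * int N - 1 - y))" using fld_char[OF y] .
  consider "y = 0" | "0 < y" "y < int N" | "y = int N" | "int N < y" "y < 2 * int N"
    using y by linarith
  then show ?thesis
  proof cases
    case 1
    have a: "fld N (x-1) = nat (2 * int N - 1 - (2 * int N - 1))"
      using fld_char[of "2 * int N - 1" N "x-1" "q - 1"] y 1 N by (simp add: algebra_simps)
    have "fld N x = 0" using fx 1 N by simp
    then show ?thesis using a unfolding stp_def using 1 ey by simp
  next
    case 2
    have a: "fld N (x-1) = nat (y - 1)"
      using fld_char[of "y-1" N "x-1" q] y 2 by simp
    have "fld N x = nat y" using fx 2 by simp
    then show ?thesis using a 2 y par_nat[of y k] ey unfolding stp_def by (simp add: nat_diff_distrib)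
  next
    case 3
    have a: "fld N (x-1) = nat (y - 1)"
      using fld_char[of "y-1" N "x-1" q] y 3 N by simp
    have b: "fld N x = nat (2 * int N - 1 - y)" using fx 3 by simp
    have h: "0 \<le> 2 * int N - 1 - y" using 3 y by linarith
    have "even (2 * int N - 1 - y + int k)" using ey by presburger
    then have "even (nat (2 * int N - 1 - y) + k)" using par_nat[OF h, of k] by simp
    then show ?thesis using a b 3 y N unfolding stp_def by simp
  next
    case 4
    have a: "fld N (x-1) = nat (2 * int N - 1 - (y - 1))"
      using fld_char[of "y-1" N "x-1" q] y 4 by simp
    have b: "fld N x = nat (2 * int N - 1 - y)" using fx 4 by simp
    have h: "0 \<le> 2 * int N - 1 - y" using 4 y by linarith
    have "even (2 * int N - 1 - y + int k)" using ey by presburger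
    then have "even (nat (2 * int N - 1 - y) + k)" using par_nat[OF h, of k] by simp
    moreover have "nat (2 * int N - 1 - y) + 1 < N" using 4 by linarith
    moreover have "nat (2 * int N - 1 - (y - 1)) = nat (2 * int N - 1 - y) + 1" using 4 by linarith
    ultimately show ?thesis using a b unfolding stp_def by simp
  qed
qed

lemma fld_lo: "0 \<le> x \<Longrightarrow> x < int N \<Longrightarrow> fld N x = nat x"
  using fld_char[of x N x 0] by simp
lemma fld_hi: "int N \<le> x \<Longrightarrow> x < 2 * int N \<Longrightarrow> fld N x = nat (2 * int N - 1 - x)"
  using fld_char[of x N x 0] by simp
lemma fld_neg: "- int N \<le> x \<Longrightarrow> x < 0 \<Longrightarrow> fld N x = nat (- x - 1)"
  using fld_char[of "x + 2 * int N" N x "-1"] by simp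
lemma fld_2N: "2 * int N \<le> x \<Longrightarrow> x < 3 * int N \<Longrightarrow> fld N x = nat (x - 2 * int N)"
  using fld_char[of "x - 2 * int N" N x 1] by simp

lemma fld_shift: assumes N: "N > 0" shows "fld N (x + int N) = N - 1 - fld N x"
proof -
  obtain q y where y: "0 \<le> y" "y < 2 * int N" "x = 2 * int N * q + y" using fld_decomp[OF N] by blast
  have fx: "fld N x = (if y < int N then nat y else nat (2 * int N - 1 - y))" using fld_char[OF y] .
  show ?thesis
  proof (cases "y < int N")
    case True
    have "fld N (x + int N) = nat (2 * int N - 1 - (y + int N))"
      using fld_char[of "y + int N" N "x + int N" q] y True by simp
    then show ?thesis using fx True y(1) by simp
  next
    case False
    have "fld N (x + int N) = nat (y - int N)"
      using fld_char[of "y - int N" N "x + int N" "q+1"] y False by (simp add: algebra_simps)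
    then show ?thesis using fx False y(2) by simp
  qed
qed

lemma fld_period: "fld N (x + 2 * int N) = fld N x"
  unfolding fld_def by simp

definition F :: "nat \<Rightarrow> nat \<Rightarrow> nat \<Rightarrow> nat" where
  "F N p t = fld N (if even p then int p + int t else int p - int t)"

lemma F_lt: "N > 0 \<Longrightarrow> F N p t < N"
  unfolding F_def by (rule fld_lt)

lemma F_Suc: assumes N: "N > 0" shows "F N p (Suc t) = stp N t (F N p t)"
proof (cases "even p")
  case True
  have "fld N ((int p + int t) + 1) = stp N t (fld N (int p + int t))"
    by (rule fld_step_plus[OF N]) (use True in presburger)
  then show ?thesis using True unfolding F_def by (simp add: algebra_simps)
next
  case False
  have "fld N ((int p - int t) - 1) = stp N t (fld N (int p - int t))"
    by (rule fld_step_minus[OF N]) (use False in presburger)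
  then show ?thesis using False unfolding F_def by (simp add: algebra_simps)
qed

lemma F_refl: assumes N: "N > 0" shows "F N p (t + N) = N - 1 - F N p t"
proof (cases "even p")
  case True
  then show ?thesis unfolding F_def using fld_shift[OF N, of "int p + int t"] by (simp add: algebra_simps)
next
  case False
  have "fld N (int p - int t - int N) = fld N (int p - int t - int N + 2 * int N)"
    by (simp only: fld_period)
  also have "\<dots> = fld N ((int p - int t) + int N)" by (simp add: algebra_simps)
  finally show ?thesis unfolding F_def using fld_shift[OF N, of "int p - int t"] False by (simp add: algebra_simps)
qed

lemma meet:
  assumes N: "N \<ge> 2" and pp: "p < p'" "p' < N" and ex: "\<not> (odd p \<and> p' = Suc p)"
  shows "\<exists>T \<le> N - 2. even (F N p T + T) \<and> F N p' T = Suc (F N p T)"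
proof -
  consider "even p" "odd p'" | "even p" "even p'" | "odd p" "odd p'" | "odd p" "even p'" by blast
  then show ?thesis
  proof cases
    case 1
    define T where "T = (p' - p - 1) div 2"
    have T2: "2 * T = p' - p - 1" unfolding T_def using 1 pp by presburger
    have a0: "F N p T = fld N (int p + int T)" unfolding F_def using 1 by simp
    have a: "F N p T = p + T" unfolding a0 using T2 pp by (subst fld_lo) auto
    have b0: "F N p' T = fld N (int p' - int T)" unfolding F_def using 1 by simp
    have b: "F N p' T = p' - T" unfolding b0 using T2 pp by (subst fld_lo) auto
    have t1: "T \<le> N - 2" using T2 pp by arith
    have t2: "even (F N p T + T)" unfolding a using 1 by simp
    have t3: "F N p' T = Suc (F N p T)" unfolding a b using T2 pp by arith
    show ?thesis using t1 t2 t3 by blast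
  next
    case 2
    obtain a b where ab: "p = 2 * a" "p' = 2 * b" using 2 by (auto elim!: evenE)
    define T where "T = N - 1 - (a + b)"
    have T2: "2 * T = 2 * N - 2 - p - p'" unfolding T_def using ab pp by arith
    have a0: "F N p T = fld N (int p + int T)" unfolding F_def using 2 by simp
    have a: "F N p T = p + T" unfolding a0 using T2 pp by (subst fld_lo) auto
    have b0: "F N p' T = fld N (int p' + int T)" unfolding F_def using 2 by simp
    have bh: "int N \<le> int p' + int T" "int p' + int T < 2 * int N" using T2 pp ab by arith+
    have b: "F N p' T = 2 * N - 1 - p' - T" unfolding b0 using bh by (subst fld_hi) auto
    have t1: "T \<le> N - 2" using T2 pp by arith
    have t2: "even (F N p T + T)" unfolding a using 2 by simp
    have t3: "F N p' T = Suc (F N p T)" unfolding a b using T2 pp bh by arith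
    show ?thesis using t1 t2 t3 by blast
  next
    case 3
    obtain a b where ab: "p = 2 * a + 1" "p' = 2 * b + 1" using 3 by (auto elim!: oddE)
    define T where "T = a + b + 1"
    have T2: "2 * T = p + p'" unfolding T_def using ab by arith
    have a0: "F N p T = fld N (int p - int T)" unfolding F_def using 3 by simp
    have ah: "- int N \<le> int p - int T" "int p - int T < 0" using T2 pp by arith+
    have a: "F N p T = T - p - 1" unfolding a0 using ah by (subst fld_neg) auto
    have b0: "F N p' T = fld N (int p' - int T)" unfolding F_def using 3 by simp
    have b: "F N p' T = p' - T" unfolding b0 using T2 pp by (subst fld_lo) auto
    have t1: "T \<le> N - 2" using T2 pp ab by arith
    have "F N p T + T = 2 * b" unfolding a using ab ah T_def by arith
    then have t2: "even (F N p T + T)" by simp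
    have t3: "F N p' T = Suc (F N p T)" unfolding a b using T2 pp ah by arith
    show ?thesis using t1 t2 t3 by blast
  next
    case 4
    have p3: "p' \<ge> p + 3" using 4 pp ex by presburger
    obtain a b where ab: "p = 2 * a + 1" "p' = 2 * b" using 4 by (auto elim!: oddE evenE)
    define T where "T = N - (b - a)"
    have T2: "2 * T = 2 * N - 1 - p' + p" unfolding T_def using ab pp p3 by arith
    have a0: "F N p T = fld N (int p - int T)" unfolding F_def using 4 by simp
    have ah: "- int N \<le> int p - int T" "int p - int T < 0" using T2 pp p3 by arith+
    have a: "F N p T = T - p - 1" unfolding a0 using ah by (subst fld_neg) auto
    have b0: "F N p' T = fld N (int p' + int T)" unfolding F_def using 4 by simp
    have bh: "int N \<le> int p' + int T" "int p' + int T < 2 * int N" using T2 pp p3 by arith+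
    have b: "F N p' T = 2 * N - 1 - p' - T" unfolding b0 using bh by (subst fld_hi) auto
    have t1: "T \<le> N - 2" using T2 pp p3 by arith
    have "F N p T + T = 2 * (T - a - 1)" unfolding a using ab ah by arith
    then have t2: "even (F N p T + T)" by simp
    have t3: "F N p' T = Suc (F N p T)" unfolding a b using T2 pp ah bh by arith
    show ?thesis using t1 t2 t3 by blast
  qed
qed



lemma pair_eq_Suc: "{a, Suc a} = {b, Suc (b::nat)} \<longleftrightarrow> a = b"
  by (auto simp: doubleton_eq_iff)

lemma sl_pair:
  assumes "swap_layer n L" "{p, Suc p} \<in> L"
  shows "Suc p < n"
proof -
  have "\<forall>P\<in>L. \<exists>i. P = {i, Suc i} \<and> Suc i < n" using assms(1) unfolding swap_layer_def by (rule conjunct1)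
  then have "\<exists>i. {p, Suc p} = {i, Suc i} \<and> Suc i < n" using assms(2) by (rule bspec)
  then obtain i where "{p, Suc p} = {i, Suc i}" "Suc i < n" by blast
  then show ?thesis by (simp add: pair_eq_Suc)
qed

lemma sl_disj:
  assumes "swap_layer n L" "{p, Suc p} \<in> L" "{q, Suc q} \<in> L" "p \<noteq> q"
  shows "q \<noteq> Suc p" "p \<noteq> Suc q"
proof -
  have "{p, Suc p} \<inter> {q, Suc q} = {}"
  proof -
    have ne: "{p, Suc p} \<noteq> {q, Suc q}" using assms(4) pair_eq_Suc by simp
    have "\<forall>P\<in>L. \<forall>Q\<in>L. P \<noteq> Q \<longrightarrow> P \<inter> Q = {}" using assms(1) unfolding swap_layer_def by (rule conjunct2)
    then show ?thesis using assms(2,3) ne by (meson)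
  qed
  then show "q \<noteq> Suc p" "p \<noteq> Suc q" by auto
qed

lemma sp_cases:
  assumes "swap_layer n L"
  shows "(swap_pos L p = Suc p \<and> {p, Suc p} \<in> L) \<or>
         (swap_pos L p + 1 = p \<and> {p - 1, p} \<in> L \<and> {p, Suc p} \<notin> L) \<or>
         (swap_pos L p = p \<and> {p, Suc p} \<notin> L \<and> (0 < p \<longrightarrow> {p - 1, p} \<notin> L))"
  unfolding swap_pos_def by auto

lemma sp_inv:
  assumes L: "swap_layer n L"
  shows "swap_pos L (swap_pos L p) = p"
proof -
  consider "swap_pos L p = Suc p" "{p, Suc p} \<in> L"
    | "swap_pos L p + 1 = p" "{p - 1, p} \<in> L" "{p, Suc p} \<notin> L"
    | "swap_pos L p = p" "{p, Suc p} \<notin> L" "0 < p \<longrightarrow> {p - 1, p} \<notin> L"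
    using sp_cases[OF L, of p] by blast
  then show ?thesis
  proof cases
    case 1
    have "{Suc p, Suc (Suc p)} \<notin> L"
      using sl_disj[OF L 1(2), of "Suc p"] by auto
    then show ?thesis using 1 unfolding swap_pos_def by simp
  next
    case 2
    then have p0: "0 < p" by simp
    then have "{p - 1, Suc (p - 1)} \<in> L" using 2 by simp
    then show ?thesis using 2 p0 unfolding swap_pos_def by simp
  next
    case 3
    then show ?thesis unfolding swap_pos_def by auto
  qed
qed

lemma sp_inj: "swap_layer n L \<Longrightarrow> inj (swap_pos L)"
  by (metis injI sp_inv)

lemma sp_lt: assumes L: "swap_layer n L" and "p < n" shows "swap_pos L p < n"
  using sp_cases[OF L, of p] sl_pair[OF L, of p] assms(2) by auto

lemma sp_near: assumes L: "swap_layer n L"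
  shows "swap_pos L p \<le> Suc p" "p \<le> Suc (swap_pos L p)"
  using sp_cases[OF L, of p] by auto

lemma sp_cross:
  assumes L: "swap_layer n L" and "p < q" and "swap_pos L q < swap_pos L p"
  shows "q = Suc p"
  using sp_cases[OF L, of p] sp_cases[OF L, of q] assms(2,3) by auto

lemma sp_bij: assumes L: "swap_layer n L" shows "bij_betw (swap_pos L) {0..<n} {0..<n}"
proof -
  have "swap_pos L ` {0..<n} \<subseteq> {0..<n}" using sp_lt[OF L] by auto
  moreover have "{0..<n} \<subseteq> swap_pos L ` {0..<n}"
  proof
    fix x assume "x \<in> {0..<n}"
    then show "x \<in> swap_pos L ` {0..<n}"
      using sp_inv[OF L, of x] sp_lt[OF L, of "swap_pos L x"] sp_lt[OF L, of x]
      by (metis atLeastLessThan_iff image_eqI zero_le)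
  qed
  ultimately show ?thesis using sp_inj[OF L]
    by (simp add: bij_betw_def subset_antisym inj_on_subset[of _ UNIV])
qed

lemma config_Suc:
  "t < length Ls \<Longrightarrow> config_at \<pi>0 Ls (Suc t) = swap_pos (Ls ! t) \<circ> config_at \<pi>0 Ls t"
  unfolding config_at_def by (simp add: take_Suc_conv_app_nth apply_layer_def)

lemma config_0: "config_at \<pi>0 Ls 0 = \<pi>0"
  unfolding config_at_def by simp

lemma config_bij:
  assumes "configuration V \<pi>0" "\<forall>L\<in>set Ls. swap_layer (card V) L" "t \<le> length Ls"
  shows "bij_betw (config_at \<pi>0 Ls t) V {0..<card V}"
  using assms(3)
proof (induction t)
  case 0
  then show ?case using assms(1) by (simp add: config_0 configuration_def)
next
  case (Suc t)
  then have t: "t < length Ls" by simp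
  have L: "swap_layer (card V) (Ls ! t)" using assms(2) t by simp
  show ?case unfolding config_Suc[OF t]
    using bij_betw_trans[OF Suc.IH[OF Suc_leD[OF Suc.prems]] sp_bij[OF L]] .
qed



lemma card_Kn_V[simp]: "card (Kn_V n) = n" by (simp add: Kn_V_def)
lemma fin_Kn_V[simp]: "finite (Kn_V n)" by (simp add: Kn_V_def)
lemma mem_Kn_V[simp]: "v \<in> Kn_V n \<longleftrightarrow> v < n" by (simp add: Kn_V_def)
lemma mem_Kn_E: "{v, w} \<in> Kn_E n \<longleftrightarrow> v < n \<and> w < n \<and> v \<noteq> w"
  unfolding Kn_E_def by (auto simp: doubleton_eq_iff)
lemma Kn_E_elem: "e \<in> Kn_E n \<Longrightarrow> \<exists>v w. e = {v, w} \<and> v < n \<and> w < n \<and> v \<noteq> w"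
  unfolding Kn_E_def by auto

lemma card_fiber_le1:
  assumes "inj_on f V" "finite V"
  shows "card {w\<in>V. f w = c} \<le> 1"
proof -
  have fin: "finite {w\<in>V. f w = c}" using assms(2) by simp
  have "\<forall>x\<in>{w\<in>V. f w = c}. \<forall>y\<in>{w\<in>V. f w = c}. x = y" using assms(1) by (auto simp: inj_on_def)
  then show ?thesis using card_le_Suc0_iff_eq[OF fin] by simp
qed

lemma net_parts:
  assumes "swap_network V E \<pi>0 Ls Is"
  shows "configuration V \<pi>0" "\<forall>L\<in>set Ls. swap_layer (card V) L"
    "\<And>t I. (t, I) \<in> set Is \<Longrightarrow> t \<le> length Ls \<and> interaction_layer E (config_at \<pi>0 Ls t) I"
  using assms unfolding swap_network_def by auto

lemma net_cover:
  assumes "swap_network V E \<pi>0 Ls Is" "e \<in> E"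
  shows "\<exists>t I. (t, I) \<in> set Is \<and> e \<in> I"
proof -
  have "\<exists>x\<in>set Is. case x of (t, I) \<Rightarrow> e \<in> I" using assms unfolding swap_network_def by blast
  then obtain x where "x \<in> set Is" "case x of (t, I) \<Rightarrow> e \<in> I" by blast
  then show ?thesis by (cases x) auto
qed

lemma il_adj:
  assumes "interaction_layer E \<pi> I" "{u, w} \<in> I"
  shows "\<pi> w = Suc (\<pi> u) \<or> \<pi> u = Suc (\<pi> w)"
proof -
  have "\<forall>e\<in>I. \<exists>v w. e = {v, w} \<and> (\<pi> v = Suc (\<pi> w) \<or> \<pi> w = Suc (\<pi> v))"
    using assms(1) unfolding interaction_layer_def by simp
  then have "\<exists>v' w'. {u, w} = {v', w'} \<and> (\<pi> v' = Suc (\<pi> w') \<or> \<pi> w' = Suc (\<pi> v'))"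
    using assms(2) by (rule bspec)
  then obtain v' w' where "{u, w} = {v', w'}" "\<pi> v' = Suc (\<pi> w') \<or> \<pi> w' = Suc (\<pi> v')"
    by blast
  then show ?thesis by (auto simp: doubleton_eq_iff)
qed

lemma swap_lb:
  assumes net: "swap_network (Kn_V n) (Kn_E n) \<pi>0 Ls Is" and n: "n \<ge> 2"
  shows "n - 2 \<le> length Ls"
proof -
  define V where "V = Kn_V n"
  define d where "d = length Ls"
  define \<pi> where "\<pi> = config_at \<pi>0 Ls"
  note np = net_parts[OF net]
  have bij: "bij_betw (\<pi> t) V {0..<n}" if "t \<le> d" for t
    using config_bij[OF np(1) np(2)] that unfolding \<pi>_def d_def V_def by simp
  have inj: "inj_on (\<pi> t) V" if "t \<le> d" for t using bij[OF that] by (simp add: bij_betw_def)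
  have L: "swap_layer n (Ls ! t)" if "t < d" for t using np(2) that unfolding d_def by simp
  have \<pi>S: "\<pi> (Suc t) = swap_pos (Ls ! t) \<circ> \<pi> t" if "t < d" for t
    using config_Suc that unfolding \<pi>_def d_def by blast
  have "0 \<in> \<pi> 0 ` V" using bij[of 0] n by (simp add: bij_betw_def)
  then obtain a where aV: "a \<in> V" and a0: "\<pi> 0 a = 0" by auto
  define nb where "nb t = {w\<in>V. \<pi> t w = Suc (\<pi> t a) \<or> \<pi> t a = Suc (\<pi> t w)}" for t
  define A where "A t = (\<Union>s\<in>{..t}. nb s)" for t
  have Amono: "A s \<subseteq> A t" if "s \<le> t" for s t unfolding A_def using that by (intro UN_mono) auto
  have nbA: "nb s \<subseteq> A t" if "s \<le> t" for s t unfolding A_def using that by auto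
  have AV: "A t \<subseteq> V" for t unfolding A_def nb_def by auto
  have finA: "finite (A t)" for t using AV finite_subset unfolding V_def by (metis fin_Kn_V)
  have inv: "\<forall>w\<in>V. \<pi> t w < \<pi> t a \<longrightarrow> w \<in> A t" if "t \<le> d" for t
    using that
  proof (induction t)
    case 0
    then show ?case using a0 by simp
  next
    case (Suc t)
    have td: "t < d" using Suc.prems by simp
    show ?case
    proof (intro ballI impI)
      fix w assume wV: "w \<in> V" and lt: "\<pi> (Suc t) w < \<pi> (Suc t) a"
      show "w \<in> A (Suc t)"
      proof (cases "\<pi> t w < \<pi> t a")
        case True
        then show ?thesis using Suc.IH td wV Amono[of t "Suc t"] by auto
      next
        case False
        have "w \<noteq> a" using lt by auto
        then have "\<pi> t w \<noteq> \<pi> t a" using inj[of t] td wV aV by (meson inj_on_contraD less_imp_le)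
        then have "\<pi> t a < \<pi> t w" using False by simp
        moreover have "swap_pos (Ls ! t) (\<pi> t w) < swap_pos (Ls ! t) (\<pi> t a)"
          using lt \<pi>S[OF td] by simp
        ultimately have "\<pi> t w = Suc (\<pi> t a)" using sp_cross[OF L[OF td]] by blast
        then have "w \<in> nb t" using wV unfolding nb_def by simp
        then show ?thesis using nbA[of t "Suc t"] by auto
      qed
    qed
  qed
  have inv': "\<forall>w\<in>V. \<pi> (Suc t) w < \<pi> (Suc t) a \<longrightarrow> w \<in> A t" if td: "t < d" for t
  proof (intro ballI impI)
    fix w assume wV: "w \<in> V" and lt: "\<pi> (Suc t) w < \<pi> (Suc t) a"
    show "w \<in> A t"
    proof (cases "\<pi> t w < \<pi> t a")
      case True
      then show ?thesis using inv[of t] td wV by auto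
    next
      case False
      have "w \<noteq> a" using lt by auto
      then have "\<pi> t w \<noteq> \<pi> t a" using inj[of t] td wV aV by (meson inj_on_contraD less_imp_le)
      then have "\<pi> t a < \<pi> t w" using False by simp
      moreover have "swap_pos (Ls ! t) (\<pi> t w) < swap_pos (Ls ! t) (\<pi> t a)"
        using lt \<pi>S[OF td] by simp
      ultimately have "\<pi> t w = Suc (\<pi> t a)" using sp_cross[OF L[OF td]] by blast
      then have "w \<in> nb t" using wV unfolding nb_def by simp
      then show ?thesis using nbA[of t t] by auto
    qed
  qed
  have cardA: "card (A t) \<le> Suc t" if "t \<le> d" for t
    using that
  proof (induction t)
    case 0
    have "A 0 = nb 0" unfolding A_def by simp
    also have "\<dots> \<subseteq> {w\<in>V. \<pi> 0 w = 1}" unfolding nb_def using a0 by auto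
    finally have "card (A 0) \<le> card {w\<in>V. \<pi> 0 w = 1}"
      by (intro card_mono) (auto simp: V_def)
    also have "\<dots> \<le> 1" by (rule card_fiber_le1[OF inj]) (auto simp: V_def)
    finally show ?case by simp
  next
    case (Suc t)
    have td: "t < d" using Suc.prems by simp
    have "A (Suc t) = A t \<union> nb (Suc t)" unfolding A_def by (auto simp: atMost_Suc)
    also have "\<dots> \<subseteq> A t \<union> {w\<in>V. \<pi> (Suc t) w = Suc (\<pi> (Suc t) a)}"
      using inv'[OF td] unfolding nb_def by auto
    finally have "card (A (Suc t)) \<le> card (A t \<union> {w\<in>V. \<pi> (Suc t) w = Suc (\<pi> (Suc t) a)})"
      by (intro card_mono) (auto simp: V_def finA)
    also have "\<dots> \<le> card (A t) + card {w\<in>V. \<pi> (Suc t) w = Suc (\<pi> (Suc t) a)}"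
      by (rule card_Un_le)
    also have "card {w\<in>V. \<pi> (Suc t) w = Suc (\<pi> (Suc t) a)} \<le> 1"
      by (rule card_fiber_le1[OF inj]) (use Suc.prems in \<open>auto simp: V_def\<close>)
    finally show ?case using Suc.IH td by simp
  qed
  have cover: "V - {a} \<subseteq> A d"
  proof
    fix w assume w: "w \<in> V - {a}"
    then have "{a, w} \<in> Kn_E n" using aV unfolding V_def by (auto simp: mem_Kn_E)
    then obtain t I where tI: "(t, I) \<in> set Is" "{a, w} \<in> I" using net_cover[OF net] by blast
    then have td: "t \<le> d" and il: "interaction_layer (Kn_E n) (\<pi> t) I"
      using np(3) unfolding d_def \<pi>_def by auto
    have "\<pi> t w = Suc (\<pi> t a) \<or> \<pi> t a = Suc (\<pi> t w)" using il_adj[OF il tI(2)] .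
    then have "w \<in> nb t" using w unfolding nb_def by auto
    then show "w \<in> A d" using nbA[OF td] by auto
  qed
  have "card (V - {a}) = n - 1" using aV unfolding V_def by simp
  moreover have "card (V - {a}) \<le> card (A d)" using cover finA by (rule card_mono[rotated])
  ultimately show ?thesis using cardA[of d] unfolding d_def by simp
qed



lemma il_parts:
  assumes "interaction_layer E \<pi> I"
  shows "I \<subseteq> E" "\<And>e e'. e \<in> I \<Longrightarrow> e' \<in> I \<Longrightarrow> e \<noteq> e' \<Longrightarrow> e \<inter> e' = {}"
  using assms unfolding interaction_layer_def by auto

lemma il_uniq:
  assumes "interaction_layer E \<pi> I" "{u, w} \<in> I" "{u, w'} \<in> I"
  shows "w = w'"
proof (rule ccontr)
  assume "w \<noteq> w'"
  then have "{u, w} \<noteq> {u, w'}" by (auto simp: doubleton_eq_iff)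
  then have "{u, w} \<inter> {u, w'} = {}" using il_parts(2)[OF assms(1) assms(2,3)] by blast
  then show False by auto
qed

lemma net_layer:
  assumes net: "swap_network V E \<pi>0 Ls Is" and j: "j < length Is"
  shows "fst (Is ! j) \<le> length Ls" "interaction_layer E (config_at \<pi>0 Ls (fst (Is ! j))) (snd (Is ! j))"
proof -
  have "(fst (Is ! j), snd (Is ! j)) \<in> set Is" using j by simp
  then show "fst (Is ! j) \<le> length Ls" "interaction_layer E (config_at \<pi>0 Ls (fst (Is ! j))) (snd (Is ! j))"
    using net_parts(3)[OF net] by blast+
qed

lemma vertex_layers:
  assumes net: "swap_network (Kn_V n) (Kn_E n) \<pi>0 Ls Is" and u: "u < n" and len: "length Is \<le> n - 1"
  shows "length Is = n - 1" "\<And>j. j < length Is \<Longrightarrow> \<exists>w. {u, w} \<in> snd (Is ! j)"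
    "\<And>j j' w. j < length Is \<Longrightarrow> j' < length Is \<Longrightarrow> {u, w} \<in> snd (Is ! j) \<Longrightarrow> {u, w} \<in> snd (Is ! j') \<Longrightarrow> j = j'"
proof -
  define m where "m = length Is"
  define I where "I j = snd (Is ! j)" for j
  have il: "interaction_layer (Kn_E n) (config_at \<pi>0 Ls (fst (Is ! j))) (I j)" if "j < m" for j
    using net_layer(2)[OF net] that unfolding m_def I_def by blast
  define J where "J = {j. j < m \<and> (\<exists>w. {u, w} \<in> I j)}"
  define f where "f j = (SOME w. {u, w} \<in> I j)" for j
  have fJ: "{u, f j} \<in> I j" if "j \<in> J" for j
    using that unfolding J_def f_def by (metis (mono_tags, lifting) mem_Collect_eq someI)
  have Jsub: "J \<subseteq> {..<m}" unfolding J_def by auto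
  have cov: "Kn_V n - {u} \<subseteq> f ` J"
  proof
    fix w assume w: "w \<in> Kn_V n - {u}"
    then have "{u, w} \<in> Kn_E n" using u by (auto simp: mem_Kn_E)
    then obtain t I' where tI: "(t, I') \<in> set Is" "{u, w} \<in> I'" using net_cover[OF net] by blast
    then obtain j where j: "j < m" "Is ! j = (t, I')" unfolding m_def by (metis in_set_conv_nth)
    then have "{u, w} \<in> I j" using tI unfolding I_def by simp
    then have jJ: "j \<in> J" using j unfolding J_def by blast
    have "f j = w" using il_uniq[OF il[OF j(1)] fJ[OF jJ] \<open>{u, w} \<in> I j\<close>] .
    then show "w \<in> f ` J" using jJ by blast
  qed
  have finJ: "finite J" using Jsub finite_subset by blast
  have "n - 1 = card (Kn_V n - {u})" using u by simp
  also have "\<dots> \<le> card (f ` J)" using cov finJ by (intro card_mono) auto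
  finally have c1: "n - 1 \<le> card (f ` J)" .
  have c2: "card (f ` J) \<le> card J" using finJ by (rule card_image_le)
  have c3: "card J \<le> m" using card_mono[OF _ Jsub] by simp
  have nm: "n - 1 \<le> m" using c1 c2 c3 by simp
  then show m1: "length Is = n - 1" using len unfolding m_def by simp
  have "card J = card {..<m}" using c1 c2 c3 nm m1 card_mono[OF _ Jsub] unfolding m_def by simp
  then have Jeq: "J = {..<m}" using card_subset_eq[OF _ Jsub] by simp
  have "card (f ` J) = card J" using c1 c2 c3 m1 unfolding m_def by simp
  then have injf: "inj_on f J" using inj_on_iff_eq_card[OF finJ, of f] by blast
  show "\<exists>w. {u, w} \<in> snd (Is ! j)" if "j < length Is" for j
    using that Jeq unfolding J_def I_def m_def by blast
  show "j = j'" if "j < length Is" "j' < length Is" "{u, w} \<in> snd (Is ! j)" "{u, w} \<in> snd (Is ! j')" for j j' w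
  proof -
    have jJ: "j \<in> J" "j' \<in> J" using that Jeq unfolding m_def by auto
    have "f j = w" using il_uniq[OF il fJ[OF jJ(1)]] that unfolding I_def m_def by blast
    moreover have "f j' = w" using il_uniq[OF il fJ[OF jJ(2)]] that unfolding I_def m_def by blast
    ultimately show ?thesis using injf jJ by (metis inj_onD)
  qed
qed

lemma int_lb:
  assumes net: "swap_network (Kn_V n) (Kn_E n) \<pi>0 Ls Is" and n: "n \<ge> 2"
  shows "n - 1 \<le> length Is"
proof (rule ccontr)
  assume "\<not> n - 1 \<le> length Is"
  then show False using vertex_layers(1)[OF net, of 0] n by simp
qed

lemma int_lb_odd:
  assumes net: "swap_network (Kn_V n) (Kn_E n) \<pi>0 Ls Is" and n: "n \<ge> 2" and odd: "odd n"
  shows "n \<le> length Is"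
proof (rule ccontr)
  assume "\<not> n \<le> length Is"
  then have len: "length Is \<le> n - 1" by simp
  have m: "length Is = n - 1" using vertex_layers(1)[OF net _ len, of 0] n by simp
  then have j0: "0 < length Is" using n odd by (cases "n = 2") auto
  define I where "I = snd (Is ! 0)"
  have il: "interaction_layer (Kn_E n) (config_at \<pi>0 Ls (fst (Is ! 0))) I"
    using net_layer(2)[OF net j0] unfolding I_def .
  have IE: "I \<subseteq> Kn_E n" using il_parts(1)[OF il] .
  have UV: "\<Union>I = Kn_V n"
  proof
    show "\<Union>I \<subseteq> Kn_V n" using IE Kn_E_elem by fastforce
    show "Kn_V n \<subseteq> \<Union>I"
    proof
      fix u assume "u \<in> Kn_V n"
      then obtain w where "{u, w} \<in> I" using vertex_layers(2)[OF net _ len j0, of u] unfolding I_def by auto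
      then show "u \<in> \<Union>I" by blast
    qed
  qed
  have c2: "card e = 2" if "e \<in> I" for e using that IE Kn_E_elem by fastforce
  have finI: "finite I" using IE unfolding Kn_E_def
    by (rule finite_subset) (rule finite_subset[of _ "Pow {0..<n}"], auto)
  have "pairwise disjnt I" using il_parts(2)[OF il] unfolding pairwise_def disjnt_def by blast
  then have "card (\<Union>I) = sum card I" by (rule card_Union_disjoint) (use IE Kn_E_elem in fastforce)
  also have "\<dots> = sum (\<lambda>_. 2) I" using c2 by (intro sum.cong) auto
  also have "\<dots> = 2 * card I" by simp
  finally have "n = 2 * card I" using UV by simp
  then show False using odd by simp
qed



lemma sp_01_in:
  assumes L: "swap_layer n L" and "{0, 1} \<in> L"
  shows "swap_pos L 0 = 1" "swap_pos L 1 = 0"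
proof -
  have in1: "{0, Suc 0} \<in> L" using assms(2) by simp
  have "{1, Suc 1} \<notin> L" using sl_disj[OF L in1, of 1] by auto
  then show "swap_pos L 0 = 1" "swap_pos L 1 = 0" using in1 unfolding swap_pos_def by auto
qed

lemma sp_01_out:
  assumes "{0, 1} \<notin> L"
  shows "swap_pos L 0 = 0"
  using assms unfolding swap_pos_def by simp

lemma sp_1_not0:
  assumes L: "swap_layer n L" and "{0, 1} \<notin> L" "swap_pos L 1 \<noteq> 1"
  shows "swap_pos L 1 = 2"
  using sp_cases[OF L, of 1] assms(2,3) by auto

lemma sp_to1:
  assumes L: "swap_layer n L" and "swap_pos L p = 1"
  shows "p \<le> 2"
  using sp_near(2)[OF L, of p] assms(2) by simp

lemma no_tight_even:
  assumes net: "swap_network (Kn_V n) (Kn_E n) \<pi>0 Ls Is" and n: "n \<ge> 4"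
    and d: "length Ls = n - 2" and m: "length Is = n - 1"
  shows False
proof -
  define V where "V = Kn_V n"
  define \<pi> where "\<pi> = config_at \<pi>0 Ls"
  define tj where "tj j = fst (Is ! j)" for j
  define I where "I j = snd (Is ! j)" for j
  note np = net_parts[OF net]
  have len: "length Is \<le> n - 1" using m by simp
  have bij: "bij_betw (\<pi> t) V {0..<n}" if "t \<le> n - 2" for t
    using config_bij[OF np(1) np(2)] that d unfolding \<pi>_def V_def by simp
  have inj: "inj_on (\<pi> t) V" if "t \<le> n - 2" for t using bij[OF that] by (simp add: bij_betw_def)
  have surj: "\<exists>v\<in>V. \<pi> t v = p" if "t \<le> n - 2" "p < n" for t p
    using bij[OF that(1)] that(2) unfolding bij_betw_def by (metis atLeastLessThan_iff image_iff zero_le)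
  have L: "swap_layer n (Ls ! t)" if "t < n - 2" for t using np(2) that d by simp
  have \<pi>S: "\<pi> (Suc t) v = swap_pos (Ls ! t) (\<pi> t v)" if "t < n - 2" for t v
    using config_Suc[of t Ls \<pi>0] that d unfolding \<pi>_def by simp
  have tjle: "tj j \<le> n - 2" if "j < n - 1" for j using net_layer(1)[OF net] that m d unfolding tj_def by simp
  have il: "interaction_layer (Kn_E n) (\<pi> (tj j)) (I j)" if "j < n - 1" for j
    using net_layer(2)[OF net] that m unfolding tj_def I_def \<pi>_def by simp
  have inV: "w \<in> V" if "j < n - 1" "{u, w} \<in> I j" for j u w
  proof -
    have "{u, w} \<in> Kn_E n" using il_parts(1)[OF il[OF that(1)]] that(2) by blast
    then show ?thesis unfolding V_def by (simp add: mem_Kn_E)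
  qed
  have has: "\<exists>w. {u, w} \<in> I j" if "u \<in> V" "j < n - 1" for u j
    using vertex_layers(2)[OF net _ len, of u j] that m unfolding V_def I_def by simp
  have uq: "j = j'" if "u \<in> V" "j < n - 1" "j' < n - 1" "{u, w} \<in> I j" "{u, w} \<in> I j'" for u j j' w
    using vertex_layers(3)[OF net _ len, of u j j' w] that m unfolding V_def I_def by simp
  have part0: "\<exists>w\<in>V. \<pi> (tj j) w = 1 \<and> {a, w} \<in> I j" if hh: "a \<in> V" "j < n - 1" "\<pi> (tj j) a = 0" for a j
  proof -
    obtain w where w: "{a, w} \<in> I j" using has[OF hh(1,2)] by blast
    have "\<pi> (tj j) w = Suc (\<pi> (tj j) a) \<or> \<pi> (tj j) a = Suc (\<pi> (tj j) w)" using il_adj[OF il[OF hh(2)] w] .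
    then have "\<pi> (tj j) w = 1" using hh(3) by simp
    then show ?thesis using w inV[OF hh(2) w] by blast
  qed
  have part1: "\<exists>c\<in>V. \<pi> (tj j) c = 0 \<and> {a, c} \<in> I j" if hh: "a \<in> V" "j < n - 1" "\<pi> (tj j) a = 1" for a j
  proof -
    obtain c where c: "c \<in> V" "\<pi> (tj j) c = 0" using surj[OF tjle[OF hh(2)], of 0] n by auto
    obtain w where w: "w \<in> V" "\<pi> (tj j) w = 1" "{c, w} \<in> I j" using part0[OF c(1) hh(2) c(2)] by blast
    have "w = a" using inj[OF tjle[OF hh(2)]] w(1,2) hh(1,3) by (metis inj_onD)
    then show ?thesis using c w(3) by (auto simp: insert_commute)
  qed
  have tinj: "inj_on tj {..<n - 1}"
  proof (rule inj_onI)
    fix j j' assume j: "j \<in> {..<n - 1}" and j': "j' \<in> {..<n - 1}" and eq: "tj j = tj j'"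
    obtain c where c: "c \<in> V" "\<pi> (tj j) c = 0" using surj[OF tjle, of j 0] j n by auto
    obtain w where w: "w \<in> V" "\<pi> (tj j) w = 1" "{c, w} \<in> I j" using part0[OF c(1) _ c(2)] j by auto
    obtain w' where w': "w' \<in> V" "\<pi> (tj j') w' = 1" "{c, w'} \<in> I j'" using part0[OF c(1), of j'] j' c(2) eq by auto
    have "w = w'" using inj[OF tjle, of j] j w(1,2) w'(1,2) eq by (metis inj_onD lessThan_iff)
    then show "j = j'" using uq[OF c(1), of j j' w] j j' w(3) w'(3) by auto
  qed
  have "tj ` {..<n - 1} \<subseteq> {..n - 2}" using tjle by auto
  moreover have "card (tj ` {..<n - 1}) = card {..n - 2}" using card_image[OF tinj] n by simp
  ultimately have timg: "tj ` {..<n - 1} = {..n - 2}" by (intro card_subset_eq) auto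
  have "0 \<in> tj ` {..<n - 1}" "1 \<in> tj ` {..<n - 1}" "2 \<in> tj ` {..<n - 1}" unfolding timg using n by auto
  then obtain j0 j1 j2 where j0: "j0 < n - 1" "tj j0 = 0" and j1: "j1 < n - 1" "tj j1 = 1"
    and j2: "j2 < n - 1" "tj j2 = 2" by auto
  have inj1: "inj_on (\<pi> 1) V" using inj n by simp
  have inj2: "inj_on (\<pi> 2) V" using inj n by simp
  obtain a where a: "a \<in> V" "\<pi> 0 a = 0" using surj[of 0 0] n by auto
  obtain x where x: "x \<in> V" "\<pi> 0 x = 1" "{a, x} \<in> I j0" using part0[OF a(1) j0(1)] a(2) j0(2) by auto
  have L1: "swap_layer n (Ls ! 0)" using L n by simp
  have L2: "swap_layer n (Ls ! 1)" using L n by simp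
  show False
  proof (cases "{0, 1} \<in> Ls ! 0")
    case True
    have "\<pi> 1 a = 1" "\<pi> 1 x = 0" using \<pi>S[of 0] n a(2) x(2) sp_01_in[OF L1 True] by simp_all
    then obtain c where c: "c \<in> V" "\<pi> 1 c = 0" "{a, c} \<in> I j1" using part1[OF a(1) j1(1)] j1(2) by auto
    have "c = x" using inj1 c(1,2) x(1) \<open>\<pi> 1 x = 0\<close> by (metis inj_onD)
    then have "j0 = j1" using uq[OF a(1) j0(1) j1(1)] x(3) c(3) by simp
    then show False using j0 j1 by simp
  next
    case False
    have a1: "\<pi> 1 a = 0" using \<pi>S[of 0] n a(2) sp_01_out[OF False] by simp
    obtain y where y: "y \<in> V" "\<pi> 1 y = 1" "{a, y} \<in> I j1" using part0[OF a(1) j1(1)] j1(2) a1 by auto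
    have yx: "y \<noteq> x" using uq[OF a(1) j0(1) j1(1)] x(3) y(3) j0 j1 by force
    have "\<pi> 1 x \<noteq> 1" using inj1 y(1,2) x(1) yx by (metis inj_onD)
    then have x1: "\<pi> 1 x = 2" using \<pi>S[of 0 x] n x(2) sp_1_not0[OF L1 False] by simp
    show False
    proof (cases "{0, 1} \<in> Ls ! 1")
      case True
      have "\<pi> 2 a = 1" "\<pi> 2 y = 0" using \<pi>S[of 1] n a1 y(2) sp_01_in[OF L2 True] by (simp_all add: numeral_2_eq_2)
      then obtain c where c: "c \<in> V" "\<pi> 2 c = 0" "{a, c} \<in> I j2" using part1[OF a(1) j2(1)] j2(2) by auto
      have "c = y" using inj2 c(1,2) y(1) \<open>\<pi> 2 y = 0\<close> by (metis inj_onD)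
      then have "j1 = j2" using uq[OF a(1) j1(1) j2(1)] y(3) c(3) by simp
      then show False using j1 j2 by simp
    next
      case False
      have a2: "\<pi> 2 a = 0" using \<pi>S[of 1] n a1 sp_01_out[OF False] by (simp add: numeral_2_eq_2)
      obtain z where z: "z \<in> V" "\<pi> 2 z = 1" "{a, z} \<in> I j2" using part0[OF a(1) j2(1)] j2(2) a2 by auto
      have "swap_pos (Ls ! 1) (\<pi> 1 z) = 1" using \<pi>S[of 1 z] n z(2) by (simp add: numeral_2_eq_2)
      then have "\<pi> 1 z \<le> 2" using sp_to1[OF L2] by blast
      then consider "\<pi> 1 z = 0" | "\<pi> 1 z = 1" | "\<pi> 1 z = 2" by linarith
      then show False
      proof cases
        case 1
        then have "z = a" using inj1 z(1) a(1) a1 by (metis inj_onD)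
        then show False using z(2) a2 by simp
      next
        case 2
        then have "z = y" using inj1 z(1) y(1,2) by (metis inj_onD)
        then have "j1 = j2" using uq[OF a(1) j1(1) j2(1)] y(3) z(3) by simp
        then show False using j1 j2 by simp
      next
        case 3
        then have "z = x" using inj1 z(1) x(1) x1 by (metis inj_onD)
        then have "j0 = j2" using uq[OF a(1) j0(1) j2(1)] x(3) z(3) by simp
        then show False using j0 j2 by simp
      qed
    qed
  qed
qed



definition OE :: "nat \<Rightarrow> nat \<Rightarrow> nat \<Rightarrow> nat set set" where
  "OE N off k = {{off + i, Suc (off + i)} | i. Suc i < N \<and> even (i + k)}"

lemma OE_mem: "{p, Suc p} \<in> OE N off k \<longleftrightarrow> off \<le> p \<and> Suc (p - off) < N \<and> even (p - off + k)"
proof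
  assume "{p, Suc p} \<in> OE N off k"
  then obtain i where "{p, Suc p} = {off + i, Suc (off + i)}" "Suc i < N" "even (i + k)"
    unfolding OE_def by blast
  then show "off \<le> p \<and> Suc (p - off) < N \<and> even (p - off + k)" by (simp add: pair_eq_Suc)
next
  assume h: "off \<le> p \<and> Suc (p - off) < N \<and> even (p - off + k)"
  then have "{p, Suc p} = {off + (p - off), Suc (off + (p - off))}" by simp
  then show "{p, Suc p} \<in> OE N off k" unfolding OE_def using h by blast
qed

lemma OE_layer:
  assumes "off + N \<le> n"
  shows "swap_layer n (OE N off k)"
  unfolding swap_layer_def
proof (intro conjI ballI impI)
  fix P assume "P \<in> OE N off k"
  then obtain i where "P = {off + i, Suc (off + i)}" "Suc i < N" unfolding OE_def by blast
  then show "\<exists>i. P = {i, Suc i} \<and> Suc i < n" using assms by (intro exI[of _ "off + i"]) simp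
next
  fix P Q assume P: "P \<in> OE N off k" and Q: "Q \<in> OE N off k" and ne: "P \<noteq> Q"
  obtain i where i: "P = {off + i, Suc (off + i)}" "even (i + k)" using P unfolding OE_def by blast
  obtain i' where i': "Q = {off + i', Suc (off + i')}" "even (i' + k)" using Q unfolding OE_def by blast
  have "i \<noteq> i'" using ne i i' by auto
  moreover have "i' \<noteq> Suc i" "i \<noteq> Suc i'" using i(2) i'(2) by presburger+
  ultimately show "P \<inter> Q = {}" using i(1) i'(1) by auto
qed

lemma sp_OE:
  assumes "off \<le> q" "q < off + N"
  shows "swap_pos (OE N off k) q = off + stp N k (q - off)"
proof -
  have m1: "{q, Suc q} \<in> OE N off k \<longleftrightarrow> Suc (q - off) < N \<and> even (q - off + k)"
    using OE_mem[of q N off k] assms(1) by blast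
  have m2: "0 < q \<and> {q - 1, q} \<in> OE N off k \<longleftrightarrow> 1 \<le> q - off \<and> odd (q - off + k)"
  proof (cases "0 < q")
    case True
    then have "{q - 1, q} = {q - 1, Suc (q - 1)}" by simp
    then have "{q - 1, q} \<in> OE N off k \<longleftrightarrow> off \<le> q - 1 \<and> Suc (q - 1 - off) < N \<and> even (q - 1 - off + k)"
      using OE_mem[of "q - 1" N off k] by (simp only:)
    also have "\<dots> \<longleftrightarrow> 1 \<le> q - off \<and> odd (q - off + k)"
    proof -
      obtain r where r: "q = off + r" using assms(1) by (metis le_add_diff_inverse)
      show ?thesis using assms True unfolding r by (cases r) auto
    qed
    finally show ?thesis using True by simp
  next
    case False
    then show ?thesis using assms by simp
  qed
  show ?thesis unfolding swap_pos_def stp_def using m1 m2 assms by auto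
qed

lemma sp_OE_lo:
  assumes "q < off"
  shows "swap_pos (OE N off k) q = q"
proof -
  have "{q, Suc q} \<notin> OE N off k" using OE_mem assms by simp
  moreover have "\<not> (0 < q \<and> {q - 1, q} \<in> OE N off k)"
  proof
    assume h: "0 < q \<and> {q - 1, q} \<in> OE N off k"
    then have "{q - 1, Suc (q - 1)} \<in> OE N off k" by simp
    then have "off \<le> q - 1" unfolding OE_mem by blast
    then show False using assms h by simp
  qed
  ultimately show ?thesis unfolding swap_pos_def by auto
qed

lemma config_OE:
  assumes N: "N > 0" and p: "p < N" and v: "\<pi>0 v = off + p" and t: "t \<le> D"
  shows "config_at \<pi>0 (map (OE N off) [0..<D]) t v = off + F N p t"
  using t
proof (induction t)
  case 0
  then show ?case using v p by (simp add: config_0 F_def fld_lo)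
next
  case (Suc t)
  have tl: "t < length (map (OE N off) [0..<D])" using Suc.prems by simp
  have "config_at \<pi>0 (map (OE N off) [0..<D]) (Suc t) v = swap_pos (OE N off t) (off + F N p t)"
    unfolding config_Suc[OF tl] using Suc tl by simp
  also have "\<dots> = off + stp N t (F N p t)" using F_lt[OF N, of p t] by (subst sp_OE) auto
  also have "\<dots> = off + F N p (Suc t)" using F_Suc[OF N] by simp
  finally show ?case .
qed

lemma config_OE_lo:
  assumes v: "\<pi>0 v < off" and t: "t \<le> D"
  shows "config_at \<pi>0 (map (OE N off) [0..<D]) t v = \<pi>0 v"
  using t
proof (induction t)
  case 0
  then show ?case by (simp add: config_0)
next
  case (Suc t)
  have tl: "t < length (map (OE N off) [0..<D])" using Suc.prems by simp
  show ?case unfolding config_Suc[OF tl] using Suc tl v by (simp add: sp_OE_lo)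
qed

definition AL :: "(nat \<Rightarrow> nat) \<Rightarrow> nat \<Rightarrow> (nat \<Rightarrow> bool) \<Rightarrow> nat set set" where
  "AL \<pi> n S = {{v, w} | v w. v < n \<and> w < n \<and> S (\<pi> v) \<and> \<pi> w = Suc (\<pi> v)}"

lemma AL_mem: "v < n \<Longrightarrow> w < n \<Longrightarrow> S (\<pi> v) \<Longrightarrow> \<pi> w = Suc (\<pi> v) \<Longrightarrow> {v, w} \<in> AL \<pi> n S"
  unfolding AL_def by blast

lemma AL_il:
  assumes inj: "inj_on \<pi> {0..<n}" and S: "\<And>i. S i \<Longrightarrow> \<not> S (Suc i)"
  shows "interaction_layer (Kn_E n) \<pi> (AL \<pi> n S)"
  unfolding interaction_layer_def
proof (intro conjI)
  show "AL \<pi> n S \<subseteq> Kn_E n"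
  proof
    fix e assume "e \<in> AL \<pi> n S"
    then obtain v w where "e = {v, w}" "v < n" "w < n" "\<pi> w = Suc (\<pi> v)" unfolding AL_def by blast
    then show "e \<in> Kn_E n" by (auto simp: mem_Kn_E)
  qed
  show "\<forall>e\<in>AL \<pi> n S. \<forall>e'\<in>AL \<pi> n S. e \<noteq> e' \<longrightarrow> e \<inter> e' = {}"
  proof (intro ballI impI)
    fix e e' assume e: "e \<in> AL \<pi> n S" and e': "e' \<in> AL \<pi> n S" and ne: "e \<noteq> e'"
    obtain v w where vw: "e = {v, w}" "v < n" "w < n" "S (\<pi> v)" "\<pi> w = Suc (\<pi> v)" using e unfolding AL_def by blast
    obtain v' w' where vw': "e' = {v', w'}" "v' < n" "w' < n" "S (\<pi> v')" "\<pi> w' = Suc (\<pi> v')" using e' unfolding AL_def by blast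
    have i: "x = y" if "x < n" "y < n" "\<pi> x = \<pi> y" for x y using inj that by (auto dest: inj_onD)
    have "v \<noteq> v'" using i[of w w'] vw vw' ne by auto
    moreover have "w \<noteq> w'" using i[of v v'] vw vw' ne by auto
    moreover have "v \<noteq> w'" using vw vw' S by auto
    moreover have "w \<noteq> v'" using vw vw' S by auto
    ultimately show "e \<inter> e' = {}" using vw(1) vw'(1) vw(5) vw'(5) by auto
  qed
  show "\<forall>e\<in>AL \<pi> n S. \<exists>v w. e = {v, w} \<and> (\<pi> v = Suc (\<pi> w) \<or> \<pi> w = Suc (\<pi> v))"
    unfolding AL_def by blast
qed



definition LsB :: "nat \<Rightarrow> nat set set list" where
  "LsB n = map (OE n 0) [0..<n - 2]"

definition IsB :: "nat \<Rightarrow> (nat \<times> nat set set) list" where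
  "IsB n = map (\<lambda>t. (t, AL (config_at id (LsB n) t) n (\<lambda>i. even (i + t)))) [0..<n - 1]
           @ [(0, AL id n odd)]"

lemma configB:
  assumes n: "n \<ge> 2" and v: "v < n" and t: "t \<le> n - 2"
  shows "config_at id (LsB n) t v = F n v t"
  using config_OE[of n v id v 0 t "n - 2"] assms unfolding LsB_def by simp

lemma cfg_id: "configuration (Kn_V n) id"
  unfolding configuration_def by (simp add: Kn_V_def)

lemma layers_ok: "\<forall>L\<in>set (map (OE N off) [0..<D]). swap_layer n L" if "off + N \<le> n"
  using OE_layer[OF that] by auto

lemma netB:
  assumes n: "n \<ge> 2"
  shows "swap_network (Kn_V n) (Kn_E n) id (LsB n) (IsB n)"
  unfolding swap_network_def
proof (intro conjI)
  show "configuration (Kn_V n) id" by (rule cfg_id)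
  show L: "\<forall>L\<in>set (LsB n). swap_layer (card (Kn_V n)) L"
    unfolding LsB_def using layers_ok[of 0 n n] by simp
  show "\<forall>(t, I)\<in>set (IsB n). t \<le> length (LsB n) \<and> interaction_layer (Kn_E n) (config_at id (LsB n) t) I"
  proof
    fix x assume x: "x \<in> set (IsB n)"
    obtain t I where xt: "x = (t, I)" by (cases x)
    show "case x of (t, I) \<Rightarrow> t \<le> length (LsB n) \<and> interaction_layer (Kn_E n) (config_at id (LsB n) t) I"
    proof (cases "x = (0, AL id n odd)")
      case True
      have "interaction_layer (Kn_E n) id (AL id n odd)" by (rule AL_il) (auto simp: inj_on_def)
      then show ?thesis using True by (simp add: config_0)
    next
      case False
      then obtain s where s: "s < n - 1" "x = (s, AL (config_at id (LsB n) s) n (\<lambda>i. even (i + s)))"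
        using x unfolding IsB_def by auto
      have sl: "s \<le> length (LsB n)" using s unfolding LsB_def by simp
      have "bij_betw (config_at id (LsB n) s) (Kn_V n) {0..<card (Kn_V n)}"
        by (rule config_bij[OF cfg_id L sl])
      then have inj: "inj_on (config_at id (LsB n) s) {0..<n}" by (simp add: bij_betw_def Kn_V_def)
      have "interaction_layer (Kn_E n) (config_at id (LsB n) s) (AL (config_at id (LsB n) s) n (\<lambda>i. even (i + s)))"
        by (rule AL_il[OF inj]) simp
      then show ?thesis using s sl by simp
    qed
  qed
  show "\<forall>e\<in>Kn_E n. \<exists>(t, I)\<in>set (IsB n). e \<in> I"
  proof
    fix e assume "e \<in> Kn_E n"
    then obtain v w where vw: "e = {v, w}" "v < n" "w < n" "v \<noteq> w" using Kn_E_elem by blast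
    have main: "\<exists>(t, I)\<in>set (IsB n). {a, b} \<in> I" if ab: "a < b" "b < n" for a b
    proof (cases "odd a \<and> b = Suc a")
      case True
      have "{a, b} \<in> AL id n odd" using True ab by (intro AL_mem) auto
      moreover have "(0, AL id n odd) \<in> set (IsB n)" unfolding IsB_def by simp
      ultimately show ?thesis by blast
    next
      case False
      obtain T where T: "T \<le> n - 2" "even (F n a T + T)" "F n b T = Suc (F n a T)"
        using meet[OF n ab(1) ab(2) False] by blast
      have ca: "config_at id (LsB n) T a = F n a T" using configB[OF n _ T(1)] ab by simp
      have cb: "config_at id (LsB n) T b = F n b T" using configB[OF n _ T(1)] ab by simp
      have "{a, b} \<in> AL (config_at id (LsB n) T) n (\<lambda>i. even (i + T))"
        using ab T ca cb by (intro AL_mem) auto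
      moreover have "(T, AL (config_at id (LsB n) T) n (\<lambda>i. even (i + T))) \<in> set (IsB n)"
        unfolding IsB_def using T(1) n by auto
      ultimately show ?thesis by blast
    qed
    show "\<exists>(t, I)\<in>set (IsB n). e \<in> I"
    proof (cases "v < w")
      case True
      then show ?thesis using main[of v w] vw by simp
    next
      case False
      then have "w < v" using vw by simp
      then show ?thesis using main[of w v] vw by (simp add: insert_commute)
    qed
  qed
qed

lemma lenB: "n \<ge> 2 \<Longrightarrow> length (LsB n) = n - 2" "n \<ge> 2 \<Longrightarrow> length (IsB n) = n"
  unfolding LsB_def IsB_def by auto



definition LsD :: "nat \<Rightarrow> nat set set list" where
  "LsD n = map (OE (n - 1) 1) [0..<2 * (n - 2)]"

definition IsD :: "nat \<Rightarrow> (nat \<times> nat set set) list" where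
  "IsD n = map (\<lambda>s. (2 * s, AL (config_at id (LsD n) (2 * s)) n even)) [0..<n - 1]"

lemma configD:
  assumes n: "n \<ge> 4" and v: "1 \<le> v" "v < n" and t: "t \<le> 2 * (n - 2)"
  shows "config_at id (LsD n) t v = 1 + F (n - 1) (v - 1) t"
  using config_OE[of "n - 1" "v - 1" id v 1 t "2 * (n - 2)"] assms unfolding LsD_def by simp

lemma configD0:
  assumes t: "t \<le> 2 * (n - 2)"
  shows "config_at id (LsD n) t 0 = 0"
  using config_OE_lo[of id 0 1 t "2 * (n - 2)" "n - 1"] assms unfolding LsD_def by simp

lemma coverD:
  assumes n: "n \<ge> 4" and ev: "even n" and ab: "a < b" "b < n"
  shows "\<exists>(t, I)\<in>set (IsD n). {a, b} \<in> I"
proof -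
  define N where "N = n - 1"
  have N: "N \<ge> 3" "odd N" using n ev unfolding N_def by auto
  have Npos: "N > 0" using N by simp
  have inl: "(2 * s, AL (config_at id (LsD n) (2 * s)) n even) \<in> set (IsD n)" if "s < n - 1" for s
    unfolding IsD_def using that by auto
  have tle: "2 * s \<le> 2 * (n - 2)" if "s < n - 1" for s using that by simp
  show ?thesis
  proof (cases "a = 0")
    case True
    define p where "p = b - 1"
    have p: "p < N" "b = Suc p" using ab True unfolding p_def N_def by auto
    have "\<exists>s < N. F N p (2 * s) = 0"
    proof (cases "p = 0")
      case True
      then show ?thesis using Npos by (intro exI[of _ 0]) (simp add: F_def fld_lo)
    next
      case False
      show ?thesis
      proof (cases "even p")
        case True
        then obtain h where h: "p = 2 * h" by (auto elim!: evenE)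
        have "F N p (2 * (N - h)) = fld N (int p + int (2 * (N - h)))" unfolding F_def using True by simp
        also have "int p + int (2 * (N - h)) = 2 * int N" using h p by simp
        also have "fld N (2 * int N) = 0" using Npos by (subst fld_2N) auto
        finally show ?thesis using h p False by (intro exI[of _ "N - h"]) auto
      next
        case odd: False
        then obtain h where h: "p = 2 * h + 1" by (auto elim!: oddE)
        have "F N p (2 * (h + 1)) = fld N (int p - int (2 * (h + 1)))" unfolding F_def using odd by simp
        also have "int p - int (2 * (h + 1)) = -1" using h by simp
        also have "fld N (-1) = 0" using Npos by (subst fld_neg) auto
        finally show ?thesis using h p N by (intro exI[of _ "h + 1"]) auto
      qed
    qed
    then obtain s where s: "s < n - 1" "F N p (2 * s) = 0" unfolding N_def by blast
    have c0: "config_at id (LsD n) (2 * s) 0 = 0" using configD0 tle[OF s(1)] by blast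
    have cb: "config_at id (LsD n) (2 * s) b = 1" using configD[OF n _ _ tle[OF s(1)], of b] p s ab
      unfolding N_def by simp
    have "{0, b} \<in> AL (config_at id (LsD n) (2 * s)) n even" using c0 cb ab n by (intro AL_mem) auto
    then show ?thesis using inl[OF s(1)] True by blast
  next
    case False
    define p where "p = a - 1"
    define p' where "p' = b - 1"
    have pp: "p < p'" "p' < N" "a = Suc p" "b = Suc p'" using ab False unfolding p_def p'_def N_def by auto
    have cfg: "config_at id (LsD n) t c = 1 + F N (c - 1) t" if "t \<le> 2 * (n - 2)" "c \<in> {a, b}" for t c
      using configD[OF n, of c t] that ab False unfolding N_def by auto
    show ?thesis
    proof (cases "odd p \<and> p' = Suc p")
      case True
      have "config_at id (LsD n) (2 * 0) = id" by (simp add: config_0)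
      moreover have "{a, b} \<in> AL id n even" using True pp ab by (intro AL_mem) auto
      ultimately show ?thesis using inl[of 0] n by auto
    next
      case nt: False
      obtain T where T: "T \<le> N - 2" "even (F N p T + T)" "F N p' T = Suc (F N p T)"
        using meet[OF _ pp(1) pp(2) nt] N by auto
      define i where "i = F N p T"
      have iN: "Suc i < N" using F_lt[OF Npos, of p' T] T(3) unfolding i_def by simp
      show ?thesis
      proof (cases "odd T")
        case True
        obtain k where "T = 2 * k + 1" using True by (auto elim!: oddE)
        then have sT: "Suc T = 2 * (k + 1)" by simp
        define s where "s = k + 1"
        note sT = sT[folded s_def]
        have s: "s < n - 1" using sT T(1) N unfolding N_def by linarith
        have fa: "F N p (Suc T) = Suc i" using F_Suc[OF Npos, of p T] T(2) iN unfolding i_def stp_def by simp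
        have fb: "F N p' (Suc T) = i" using F_Suc[OF Npos, of p' T] T(2,3) unfolding i_def stp_def by simp
        have ca: "config_at id (LsD n) (2 * s) a = Suc (Suc i)" using cfg[OF tle[OF s], of a] fa sT pp by simp
        have cb: "config_at id (LsD n) (2 * s) b = Suc i" using cfg[OF tle[OF s], of b] fb sT pp by simp
        have ei: "even (Suc i)" using T(2) True unfolding i_def by simp
        have "{b, a} \<in> AL (config_at id (LsD n) (2 * s)) n even" using ca cb ei ab by (intro AL_mem) auto
        then show ?thesis using inl[OF s] by (auto simp: insert_commute)
      next
        case False
        have ie: "even i" using T(2) False unfolding i_def by simp
        obtain k where k: "T = 2 * k" using False by (auto elim!: evenE)
        obtain m where m: "N = 2 * m + 1" using N by (auto elim!: oddE)
        obtain j where j: "i = 2 * j" using ie by (auto elim!: evenE)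
        have jm: "j < m" using iN m j by simp
        define s where "s = k + m + 1"
        have sT: "Suc (T + N) = 2 * s" unfolding s_def using k m by simp
        have s: "s < n - 1" using sT T(1) N unfolding N_def by linarith
        have ra: "F N p (T + N) = N - 1 - i" using F_refl[OF Npos] unfolding i_def by simp
        have rb: "F N p' (T + N) = N - 2 - i" using F_refl[OF Npos, of p' T] T(3) unfolding i_def by simp
        have "N - 1 - i + (T + N) = 2 * (m - j + k + m) + 1" using k m j jm by simp
        then have e1: "odd (N - 1 - i + (T + N))" by simp
        have "N - 2 - i + (T + N) = 2 * (2 * m - j + k)" using k m j jm by simp
        then have e2: "even (N - 2 - i + (T + N))" by simp
        have fa: "F N p (Suc (T + N)) = N - 2 - i" using F_Suc[OF Npos, of p "T + N"] ra e1 iN unfolding stp_def by simp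
        have h1: "N - 2 - i + 1 = N - 1 - i" "N - 2 - i + 1 < N" using iN by arith+
        have fb: "F N p' (Suc (T + N)) = N - 1 - i" using F_Suc[OF Npos, of p' "T + N"] rb e2 h1 unfolding stp_def by simp
        have ca: "config_at id (LsD n) (2 * s) a = 1 + (N - 2 - i)" using cfg[OF tle[OF s], of a] fa sT pp by simp
        have cb: "config_at id (LsD n) (2 * s) b = Suc (1 + (N - 2 - i))" using cfg[OF tle[OF s], of b] fb sT pp iN by simp
        have "1 + (N - 2 - i) = 2 * (m - j)" using m j jm by simp
        then have ei: "even (1 + (N - 2 - i))" by simp
        have "{a, b} \<in> AL (config_at id (LsD n) (2 * s)) n even" using ca cb ei ab by (intro AL_mem) auto
        then show ?thesis using inl[OF s] by auto
      qed
    qed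
  qed
qed

lemma netD:
  assumes n: "n \<ge> 4" and ev: "even n"
  shows "swap_network (Kn_V n) (Kn_E n) id (LsD n) (IsD n)"
  unfolding swap_network_def
proof (intro conjI)
  show "configuration (Kn_V n) id" by (rule cfg_id)
  show L: "\<forall>L\<in>set (LsD n). swap_layer (card (Kn_V n)) L"
    unfolding LsD_def using layers_ok[of 1 "n - 1" n] n by simp
  show "\<forall>(t, I)\<in>set (IsD n). t \<le> length (LsD n) \<and> interaction_layer (Kn_E n) (config_at id (LsD n) t) I"
  proof
    fix x assume x: "x \<in> set (IsD n)"
    then obtain s where s: "s < n - 1" "x = (2 * s, AL (config_at id (LsD n) (2 * s)) n even)"
      unfolding IsD_def by auto
    have sl: "2 * s \<le> length (LsD n)" using s unfolding LsD_def by simp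
    have "bij_betw (config_at id (LsD n) (2 * s)) (Kn_V n) {0..<card (Kn_V n)}"
      by (rule config_bij[OF cfg_id L sl])
    then have inj: "inj_on (config_at id (LsD n) (2 * s)) {0..<n}" by (simp add: bij_betw_def Kn_V_def)
    have "interaction_layer (Kn_E n) (config_at id (LsD n) (2 * s)) (AL (config_at id (LsD n) (2 * s)) n even)"
      by (rule AL_il[OF inj]) simp
    then show "case x of (t, I) \<Rightarrow> t \<le> length (LsD n) \<and> interaction_layer (Kn_E n) (config_at id (LsD n) t) I"
      using s sl by simp
  qed
  show "\<forall>e\<in>Kn_E n. \<exists>(t, I)\<in>set (IsD n). e \<in> I"
  proof
    fix e assume "e \<in> Kn_E n"
    then obtain v w where vw: "e = {v, w}" "v < n" "w < n" "v \<noteq> w" using Kn_E_elem by blast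
    show "\<exists>(t, I)\<in>set (IsD n). e \<in> I"
    proof (cases "v < w")
      case True
      then show ?thesis using coverD[OF n ev, of v w] vw by simp
    next
      case False
      then have "w < v" using vw by simp
      then show ?thesis using coverD[OF n ev, of w v] vw by (simp add: insert_commute)
    qed
  qed
qed

lemma lenD: "length (IsD n) = n - 1"
  unfolding IsD_def by simp


theorem lemma1:
  fixes n :: nat
  assumes "n \<ge> 2"
  shows "d_swap (Kn_V n) (Kn_E n) = n - 2
       \<and> (\<exists>\<pi>0 Ls Is. swap_network (Kn_V n) (Kn_E n) \<pi>0 Ls Is
                      \<and> length Ls = n - 2 \<and> length Is = n)
       \<and> (odd n \<longrightarrow> (\<forall>\<pi>0 Ls Is. swap_network (Kn_V n) (Kn_E n) \<pi>0 Ls Is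
                      \<longrightarrow> length Is \<ge> n))
       \<and> (even n \<and> n > 2 \<longrightarrow>
            d_int (Kn_V n) (Kn_E n) = n - 1
          \<and> \<not> (\<exists>\<pi>0 Ls Is. swap_network (Kn_V n) (Kn_E n) \<pi>0 Ls Is
                      \<and> length Ls = n - 2 \<and> length Is = n - 1))"
proof (intro conjI impI allI)
  have n: "n \<ge> 2" using assms .
  show "d_swap (Kn_V n) (Kn_E n) = n - 2"
    unfolding d_swap_def
  proof (rule Least_equality)
    show "\<exists>\<pi>0 Ls Is. swap_network (Kn_V n) (Kn_E n) \<pi>0 Ls Is \<and> length Ls = n - 2"
      using netB[OF n] lenB(1)[OF n] by blast
  next
    fix y assume "\<exists>\<pi>0 Ls Is. swap_network (Kn_V n) (Kn_E n) \<pi>0 Ls Is \<and> length Ls = y"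
    then show "n - 2 \<le> y" using swap_lb[OF _ n] by blast
  qed
  show "\<exists>\<pi>0 Ls Is. swap_network (Kn_V n) (Kn_E n) \<pi>0 Ls Is \<and> length Ls = n - 2 \<and> length Is = n"
    using netB[OF n] lenB[OF n] by blast
  show "n \<le> length Is" if "odd n" "swap_network (Kn_V n) (Kn_E n) \<pi>0 Ls Is" for \<pi>0 Ls Is
    using int_lb_odd[OF that(2) n that(1)] .
  assume ev: "even n \<and> n > 2"
  then have n4: "n \<ge> 4" by presburger
  show "d_int (Kn_V n) (Kn_E n) = n - 1"
    unfolding d_int_def
  proof (rule Least_equality)
    show "\<exists>\<pi>0 Ls Is. swap_network (Kn_V n) (Kn_E n) \<pi>0 Ls Is \<and> length Is = n - 1"
      using netD[OF n4] ev lenD by blast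
  next
    fix y assume "\<exists>\<pi>0 Ls Is. swap_network (Kn_V n) (Kn_E n) \<pi>0 Ls Is \<and> length Is = y"
    then show "n - 1 \<le> y" using int_lb[OF _ n] by blast
  qed
  show "\<not> (\<exists>\<pi>0 Ls Is. swap_network (Kn_V n) (Kn_E n) \<pi>0 Ls Is \<and> length Ls = n - 2 \<and> length Is = n - 1)"
    using no_tight_even[OF _ n4] by blast
qed

end
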